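(* Let $d\in\{1,2\}$, and set $a_{N,1}=(c^2_{N,1}N^{1/2})^{-1/2}$ and $a_{N,2}=(c^2_{N,2}\log N)^{-1/2}$. For $1\le k\le N$ let $f_k=c_{N,d}\sum_{x\in\mathbb{Z}^d}h(k,x)p_0(k,x)$. Then $$\sum_{k=1}^N a_{N,d}f_k\Rightarrow \xi\quad(N\to\infty),$$ where $\xi$ is some Gaussian random variable and $\Rightarrow$ denotes convergence in distribution under $Q$.
   Context: $p_0(n,x)$ denotes the probability that simple (nearest-neighbour) random walk on $\mathbb{Z}^d$ started at $0$ is at $x$ at time $n$. The environment $h=\{h(n,x):n\in\mathbb{N},x\in\mathbb{Z}^d\}$ is i.i.d. with $h(n,x)=\pm1$ each with probability $1/2$ on a probability space $(H,\mathcal{G},Q)$. $(c_{N,d})$ is a sequence of positive numbers with $\lim_{N\to\infty}c_{N,1}^2N^{1/2}=0$ for $d=1$ and $\lim_{N\to\infty}c_{N,2}^2\log N=0$ for $d=2$. *)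

theory Defs
  imports "HOL-Probability.Probability"
begin

text \<open>Points of Z^d are represented as integer lists of length d.
  unit_shift d i s x moves coordinate i of x by s.\<close>

fun p0 :: "nat \<Rightarrow> nat \<Rightarrow> int list \<Rightarrow> real" where
  "p0 d 0 x = (if x = replicate d 0 then 1 else 0)"
| "p0 d (Suc n) x =
     (if length x = d then
        (\<Sum>i<d. (p0 d n (x[i := x ! i - 1]) + p0 d n (x[i := x ! i + 1]))) / (2 * real d)
      else 0)"

text \<open>Box containing the support of p0 d k (all points within sup-distance k of 0).
  Sums over Z^d of functions supported in it are rendered as finite sums over this box.\<close>
definition box :: "nat \<Rightarrow> nat \<Rightarrow> int list set" where
  "box d k = {x. length x = d \<and> (\<forall>i<d. \<bar>x ! i\<bar> \<le> int k)}"

definition aN :: "nat \<Rightarrow> (nat \<Rightarrow> real) \<Rightarrow> nat \<Rightarrow> real" where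
  "aN d c N = (if d = 1 then ((c N)\<^sup>2 * sqrt (real N)) powr (-1/2)
               else ((c N)\<^sup>2 * ln (real N)) powr (-1/2))"

definition fk :: "nat \<Rightarrow> (nat \<Rightarrow> real) \<Rightarrow> (nat \<Rightarrow> int list \<Rightarrow> 'a \<Rightarrow> real) \<Rightarrow> nat \<Rightarrow> nat \<Rightarrow> 'a \<Rightarrow> real" where
  "fk d c h N k \<omega> = c N * (\<Sum>x\<in>box d k. h k x \<omega> * p0 d k x)"

end

theory Submission
  imports Defs
begin


fun g :: "nat \<Rightarrow> int \<Rightarrow> real" where
  "g 0 x = (if x = 0 then 1 else 0)"
| "g (Suc n) x = (g n (x - 1) + g n (x + 1)) / 2"

lemma p0_1: "p0 1 k [x] = g k x"
  by (induction k arbitrary: x) auto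

lemma p0_len: "length x \<noteq> d \<Longrightarrow> p0 d k x = 0"
  by (induction k) auto

lemma p0_2: "p0 2 k [x, y] = g k (x + y) * g k (x - y)"
proof (induction k arbitrary: x y)
  case 0 then show ?case by (auto simp: numeral_2_eq_2)
next
  case (Suc n)
  have "p0 2 (Suc n) [x, y] = (p0 2 n [x-1,y] + p0 2 n [x+1,y] + (p0 2 n [x,y-1] + p0 2 n [x,y+1])) / 4"
    by (simp add: numeral_2_eq_2 lessThan_Suc)
  also have "\<dots> = (g n (x+y-1) + g n (x+y+1)) * (g n (x-y-1) + g n (x-y+1)) / 4"
    unfolding Suc by (simp add: algebra_simps)
  finally show ?case by simp
qed

lemma g_nonneg: "g k x \<ge> 0"
  by (induction k arbitrary: x) auto

lemma g_le1: "g k x \<le> 1"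
proof (induction k arbitrary: x)
  case (Suc k)
  have "g k (x-1) \<le> 1" "g k (x+1) \<le> 1" by (rule Suc.IH)+
  then show ?case by simp
qed auto

lemma g_supp: "g k x \<noteq> 0 \<Longrightarrow> \<bar>x\<bar> \<le> int k \<and> even (x + int k)"
proof (induction k arbitrary: x)
  case (Suc k)
  then have "g k (x-1) \<noteq> 0 \<or> g k (x+1) \<noteq> 0" by auto
  then show ?case using Suc.IH[of "x-1"] Suc.IH[of "x+1"] by auto
qed (auto split: if_splits)

lemma g_val: "g k (2 * int j - int k) = (k choose j) / 2 ^ k"
proof (induction k arbitrary: j)
  case 0 then show ?case by auto
next
  case (Suc k)
  show ?case
  proof (cases j)
    case 0
    have "g k (- int k - 2) = 0" using g_supp[of k "- int k - 2"] by (cases "g k (- int k - 2) = 0") auto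
    moreover have "g k (- int k) = 1 / 2 ^ k" using Suc.IH[of 0] by simp
    ultimately show ?thesis using 0 by (simp add: algebra_simps)
  next
    case (Suc j')
    have "g (Suc k) (2 * int j - int (Suc k)) = (g k (2 * int j' - int k) + g k (2 * int (Suc j') - int k)) / 2"
      using Suc by (simp add: algebra_simps)
    also have "\<dots> = ((k choose j') + (k choose Suc j')) / 2 ^ Suc k"
      using Suc.IH[of j'] Suc.IH[of "Suc j'"] by (simp add: add_divide_distrib)
    also have "\<dots> = (Suc k choose j) / 2 ^ Suc k" using Suc by (simp add: add.commute)
    finally show ?thesis .
  qed
qed


definition phi :: "nat \<Rightarrow> nat \<Rightarrow> int" where "phi k j = 2 * int j - int k"

lemma phi_inj: "inj_on (phi k) {..k}"
  by (auto simp: inj_on_def phi_def)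

lemma g_supp_phi: "g k x \<noteq> 0 \<Longrightarrow> x \<in> phi k ` {..k}"
proof -
  assume "g k x \<noteq> 0"
  from g_supp[OF this] have h: "\<bar>x\<bar> \<le> int k" "even (x + int k)" by auto
  then obtain m where m: "x + int k = 2 * m" by (meson evenE)
  have "m \<ge> 0" "m \<le> int k" using h m by auto
  then have "x = phi k (nat m)" "nat m \<in> {..k}" using m by (auto simp: phi_def)
  then show ?thesis by blast
qed

lemma sum_g: fixes F :: "real \<Rightarrow> real" assumes "F 0 = 0"
  shows "(\<Sum>x\<in>{-int k..int k}. F (g k x)) = (\<Sum>j\<le>k. F (g k (phi k j)))"
proof -
  have "(\<Sum>x\<in>{-int k..int k}. F (g k x)) = (\<Sum>x\<in>phi k ` {..k}. F (g k x))"
  proof (rule sum.mono_neutral_right)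
    show "phi k ` {..k} \<subseteq> {-int k..int k}" by (auto simp: phi_def)
    show "\<forall>i\<in>{- int k..int k} - phi k ` {..k}. F (g k i) = 0"
      using g_supp_phi assms by (metis DiffE)
  qed auto
  also have "\<dots> = (\<Sum>j\<le>k. F (g k (phi k j)))"
    by (rule sum.reindex[OF phi_inj, unfolded comp_def])
  finally show ?thesis .
qed

definition r :: "nat \<Rightarrow> real" where "r k = ((2*k) choose k) / 4 ^ k"

lemma sum_phi_sq: "(\<Sum>j\<le>k. (g k (phi k j))\<^sup>2) = r k"
proof -
  have "(\<Sum>j\<le>k. (g k (phi k j))\<^sup>2) = (\<Sum>j\<le>k. real ((k choose j)^2)) / 4 ^ k"
  proof -
    have 4: "((2::real) ^ k)\<^sup>2 = 4 ^ k" by (simp add: power_mult[symmetric] power_mult_distrib mult.commute[of k 2] power_mult)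
    show ?thesis by (simp add: phi_def g_val power_divide sum_divide_distrib 4)
  qed
  also have "\<dots> = r k" unfolding r_def by (simp only: of_nat_sum[symmetric] choose_square_sum)
  finally show ?thesis .
qed

lemma s1: "(\<Sum>x\<in>{-int k..int k}. (g k x)\<^sup>2) = r k"
  using sum_g[of "\<lambda>v. v\<^sup>2" k] sum_phi_sq by simp

lemma s2: "(\<Sum>(x,y)\<in>{-int k..int k} \<times> {-int k..int k}. (g k (x+y) * g k (x-y))\<^sup>2) = (r k)\<^sup>2"
proof -
  let ?A = "{..k} \<times> {..k}"
  define \<psi> where "\<psi> = (\<lambda>(i,j). (int i + int j - int k, int i - int j))"
  have inj: "inj_on \<psi> ?A" by (auto simp: inj_on_def \<psi>_def)
  have "(\<Sum>(x,y)\<in>{-int k..int k} \<times> {-int k..int k}. (g k (x+y) * g k (x-y))\<^sup>2)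
      = (\<Sum>(x,y)\<in>\<psi> ` ?A. (g k (x+y) * g k (x-y))\<^sup>2)"
  proof (rule sum.mono_neutral_right)
    show "\<psi> ` ?A \<subseteq> {-int k..int k} \<times> {-int k..int k}" by (auto simp: \<psi>_def)
    show "\<forall>p\<in>{- int k..int k} \<times> {- int k..int k} - \<psi> ` ?A. (case p of (x,y) \<Rightarrow> (g k (x+y) * g k (x-y))\<^sup>2) = 0"
    proof (intro ballI)
      fix p assume p: "p \<in> {- int k..int k} \<times> {- int k..int k} - \<psi> ` ?A"
      obtain x y where xy: "p = (x,y)" by force
      show "(case p of (x,y) \<Rightarrow> (g k (x+y) * g k (x-y))\<^sup>2) = 0"
      proof (rule ccontr)
        assume "(case p of (x,y) \<Rightarrow> (g k (x+y) * g k (x-y))\<^sup>2) \<noteq> 0"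
        then have "g k (x+y) \<noteq> 0" "g k (x-y) \<noteq> 0" using xy by auto
        then obtain i j where "i \<le> k" "j \<le> k" "x + y = phi k i" "x - y = phi k j"
          using g_supp_phi by blast
        then have "p = \<psi> (i, j)" "(i,j) \<in> ?A" using xy by (auto simp: \<psi>_def phi_def)
        then show False using p by blast
      qed
    qed
  qed auto
  also have "\<dots> = (\<Sum>(i,j)\<in>?A. (g k (phi k i) * g k (phi k j))\<^sup>2)"
    by (subst sum.reindex[OF inj]) (auto intro!: sum.cong simp: \<psi>_def phi_def algebra_simps)
  also have "\<dots> = (\<Sum>i\<le>k. (g k (phi k i))\<^sup>2) * (\<Sum>j\<le>k. (g k (phi k j))\<^sup>2)"
    by (simp add: sum_product sum.cartesian_product power_mult_distrib)
  also have "\<dots> = (r k)\<^sup>2" using sum_phi_sq by (simp add: power2_eq_square)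
  finally show ?thesis .
qed




lemma binom_rec: "((2*k+2) choose (k+1)) * (k+1) * (k+1) = (2*k+2) * (2*k+1) * ((2*k) choose k)"
proof -
  have a: "(2*k+2) * ((2*k+1) choose k) = ((2*k+2) choose (k+1)) * (k+1)"
    using Suc_times_binomial_eq[of "2*k+1" k] by (simp del: binomial_Suc_Suc add: ac_simps)
  have b: "(2*k+1) * ((2*k) choose k) = ((2*k+1) choose (k+1)) * (k+1)"
    using Suc_times_binomial_eq[of "2*k" k] by (simp del: binomial_Suc_Suc add: ac_simps)
  have c: "((2*k+1) choose k) = ((2*k+1) choose (k+1))"
    using binomial_symmetric[of k "2*k+1"] by simp
  show ?thesis using a b c by (metis mult.assoc mult.commute)
qed

lemma r_Suc: "r (Suc k) = r k * (2*k+1) / (2*k+2)"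
proof -
  define C where "C = real ((2*k+2) choose (k+1))"
  define D where "D = real ((2*k) choose k)"
  have e: "C * (real k+1) * (real k+1) = (2*real k+2) * (2*real k+1) * D"
  proof -
    have "real (((2*k+2) choose (k+1)) * (k+1) * (k+1)) = real ((2*k+2) * (2*k+1) * ((2*k) choose k))"
      using binom_rec by (simp only:)
    then show ?thesis unfolding C_def D_def by (simp only: of_nat_mult of_nat_add of_nat_numeral of_nat_1)
  qed
  have rS: "r (Suc k) = C / (4 * 4^k)" unfolding r_def C_def by (simp del: binomial_Suc_Suc add: ac_simps)
  have rk: "r k = D / 4^k" unfolding r_def D_def by simp
  have pos: "(real k+1) * (real k+1) \<noteq> 0" by simp
  have "C = C * ((real k+1) * (real k+1)) / ((real k+1) * (real k+1))" using pos by simp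
  also have "\<dots> = (2*real k+2) * (2*real k+1) * D / ((real k+1) * (real k+1))"
    using e by (simp only: mult.assoc)
  finally have C: "C = (2*real k+2) * (2*real k+1) * D / ((real k+1) * (real k+1))" .
  have p1: "real k + 1 \<noteq> 0" "2 * real k + 2 \<noteq> 0" "(4::real)^k \<noteq> 0" by simp_all
  have "r (Suc k) = D / 4^k * ((2*real k+2) / (real k + 1)) * ((2*real k+1) / (real k + 1)) / 4"
    unfolding rS C by (simp add: ac_simps)
  also have "(2*real k+2) / (real k + 1) = 2" using p1 by (simp add: divide_eq_eq)
  also have "D / 4^k * 2 * ((2*real k+1)/(real k+1)) / 4 = D/4^k * ((2*real k+1)/(2*real k+2))"
  proof -
    have "(2*real k+1)/(2*real k+2) = ((2*real k+1)/(real k+1))/2"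
      by (simp add: divide_divide_eq_left algebra_simps)
    then show ?thesis by simp
  qed
  finally show ?thesis unfolding rk by (simp add: ac_simps)
qed

lemma r_pos: "r k > 0" by (simp add: r_def)

lemma r_0: "r 0 = 1" by (simp add: r_def)

lemma sum_r: "(\<Sum>k\<in>{1..N}. r k) = (2*real N+1) * r N - 1"
proof (induction N)
  case 0 then show ?case by (simp add: r_0)
next
  case (Suc N)
  have "(\<Sum>k\<in>{1..Suc N}. r k) = (2*real N+1) * r N - 1 + r (Suc N)" using Suc by simp
  also have "\<dots> = (2*real (Suc N)+1) * r (Suc N) - 1" by (simp add: r_Suc field_simps)
  finally show ?case .
qed

definition qq :: "nat \<Rightarrow> real" where "qq k = real k * (r k)\<^sup>2"
definition qp :: "nat \<Rightarrow> real" where "qp k = (real k + 1/2) * (r k)\<^sup>2"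

lemma ineq1: assumes "(x::real) \<ge> 0" shows "x \<le> (x+1) * ((2*x+1)/(2*x+2))^2"
proof -
  have p: "(2*x+2)^2 > 0" using assms by simp
  have "(x+1)*(2*x+1)^2 - x*(2*x+2)^2 = x+1" by (simp add: power2_eq_square algebra_simps)
  then have "x*(2*x+2)^2 \<le> (x+1)*(2*x+1)^2" using assms by linarith
  then show ?thesis using p by (simp add: power_divide pos_le_divide_eq)
qed

lemma ineq2: assumes "(x::real) \<ge> 0" shows "(x+1+1/2) * ((2*x+1)/(2*x+2))^2 \<le> x + 1/2"
proof -
  have p: "(2*x+2)^2 > 0" using assms by simp
  have "(x + 1/2)*(2*x+2)^2 - (x+1+1/2)*(2*x+1)^2 = x + 1/2" by (simp add: power2_eq_square algebra_simps)
  then have "(x+1+1/2)*(2*x+1)^2 \<le> (x + 1/2)*(2*x+2)^2" using assms by linarith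
  then show ?thesis using p by (simp add: power_divide pos_divide_le_eq)
qed

lemma r_Suc': "r (Suc k) = r k * ((2*real k+1)/(2*real k+2))" by (simp add: r_Suc ac_simps)

lemma qq_mono: "qq k \<le> qq (Suc k)"
proof -
  have "qq (Suc k) = (r k)\<^sup>2 * ((real k+1) * ((2*real k+1)/(2*real k+2))^2)"
    unfolding qq_def r_Suc' power_mult_distrib by (simp add: ac_simps)
  moreover have "qq k = (r k)\<^sup>2 * real k" by (simp add: qq_def)
  ultimately show ?thesis using ineq1[of "real k"] by (simp add: mult_left_mono)
qed

lemma qp_mono: "qp (Suc k) \<le> qp k"
proof -
  have "qp (Suc k) = (r k)\<^sup>2 * ((real k+1+1/2) * ((2*real k+1)/(2*real k+2))^2)"
    unfolding qp_def r_Suc' power_mult_distrib by (simp add: ac_simps)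
  moreover have "qp k = (r k)\<^sup>2 * (real k + 1/2)" by (simp add: qp_def)
  ultimately show ?thesis using ineq2[of "real k"] by (simp add: mult_left_mono)
qed

lemma qq_le_qp: "qq k \<le> qp k" by (simp add: qq_def qp_def mult_right_mono)

lemma qp_le: "m \<le> k \<Longrightarrow> qp k \<le> qp m"
  by (induction k rule: dec_induct) (auto intro: order_trans[OF qp_mono])

lemma incseq_qq: "incseq qq" by (simp add: incseq_SucI qq_mono)

definition L :: real where "L = lim qq"

lemma qq_bdd: "qq k \<le> 1/2" using qq_le_qp[of k] qp_le[of 0 k] by (simp add: qp_def r_0)

lemma qq_lim: "qq \<longlonglongrightarrow> L"
proof -
  obtain l where "qq \<longlonglongrightarrow> l" using incseq_convergent[OF incseq_qq, of "1/2"] qq_bdd by blast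
  then have "convergent qq" by (auto simp: convergent_def)
  then show ?thesis by (simp add: L_def convergent_LIMSEQ_iff)
qed

lemma qq_le_L: "qq k \<le> L" using incseq_le[OF incseq_qq qq_lim] by simp

lemma L_le_qp: "L \<le> qp m"
proof (rule LIMSEQ_le_const2[OF qq_lim])
  show "\<exists>N. \<forall>n\<ge>N. qq n \<le> qp m" using qq_le_qp qp_le order_trans by blast
qed

lemma L_pos: "L > 0"
proof -
  have "qq 1 > 0" using r_pos[of 1] by (simp add: qq_def)
  then show ?thesis using qq_le_L[of 1] by simp
qed




lemma V1_lim: "(\<lambda>N. ((2*real N+1) * r N - 1) / sqrt (real N)) \<longlonglongrightarrow> 2 * sqrt L"
proof -
  have ev: "\<forall>\<^sub>F N in sequentially. (2 + 1 / real N) * sqrt (qq N) - 1 / sqrt (real N) = ((2*real N+1) * r N - 1) / sqrt (real N)"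
  proof (rule eventually_sequentiallyI[of 1])
    fix N :: nat assume N: "N \<ge> 1"
    have rN: "r N = sqrt (qq N) / sqrt (real N)"
      using r_pos[of N] N by (simp add: qq_def real_sqrt_mult)
    have sN: "sqrt (real N) * sqrt (real N) = real N" by simp
    have "((2*real N+1) * r N - 1) / sqrt (real N) = (2*real N+1) * sqrt (qq N) / (sqrt (real N) * sqrt (real N)) - 1 / sqrt (real N)"
      unfolding rN by (simp add: diff_divide_distrib)
    also have "\<dots> = (2 + 1 / real N) * sqrt (qq N) - 1 / sqrt (real N)"
      unfolding sN using N by (simp add: field_simps)
    finally show "(2 + 1 / real N) * sqrt (qq N) - 1 / sqrt (real N) = ((2*real N+1) * r N - 1) / sqrt (real N)" by simp
  qed
  have a: "(\<lambda>N. 1 / real N) \<longlonglongrightarrow> 0" by (rule lim_const_over_n)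
  have b: "(\<lambda>N. 1 / sqrt (real N)) \<longlonglongrightarrow> 0"
  proof -
    have "(\<lambda>N. sqrt (1 / real N)) \<longlonglongrightarrow> sqrt 0" by (intro tendsto_intros a)
    then show ?thesis by (simp add: real_sqrt_divide)
  qed
  have "(\<lambda>N. (2 + 1 / real N) * sqrt (qq N) - 1 / sqrt (real N)) \<longlonglongrightarrow> (2 + 0) * sqrt L - 0"
    by (intro tendsto_intros a b qq_lim)
  then show ?thesis using tendsto_cong[OF ev] by simp
qed

lemma r2_upper: "k \<ge> 1 \<Longrightarrow> (r k)\<^sup>2 \<le> L / real k"
  using qq_le_L[of k] by (simp add: qq_def field_simps)

lemma r2_lower: "L / (real k + 1) \<le> (r k)\<^sup>2"
proof -
  have "L \<le> (real k + 1/2) * (r k)\<^sup>2" using L_le_qp[of k] by (simp add: qp_def)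
  also have "\<dots> \<le> (real k + 1) * (r k)\<^sup>2" by (intro mult_right_mono) auto
  finally show ?thesis by (simp add: field_simps)
qed

lemma sum_inv_shift: "(\<Sum>k\<in>{1..N}. 1 / (real k + 1)) = harm (Suc N) - 1"
proof (induction N)
  case 0 then show ?case by (simp add: harm_def)
next
  case (Suc N)
  have "(\<Sum>k\<in>{1..Suc N}. 1 / (real k + 1)) = harm (Suc N) - 1 + 1 / (real (Suc N) + 1)"
    using Suc by simp
  also have "\<dots> = harm (Suc (Suc N)) - 1" by (simp add: harm_Suc inverse_eq_divide add.commute)
  finally show ?case .
qed

lemma harm_upper: "N \<ge> 1 \<Longrightarrow> harm N \<le> ln (real N) + (1::real)"
  using euler_mascheroni_sequence_decreasing[of 1 N] by (simp add: harm_def)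

lemma inv_ln_lim: "(\<lambda>N. 1 / ln (real N)) \<longlonglongrightarrow> 0"
proof -
  have "filterlim (\<lambda>N. ln (real N)) at_top sequentially"
    by (rule filterlim_compose[OF ln_at_top filterlim_real_sequentially])
  then have "(\<lambda>N. inverse (ln (real N))) \<longlonglongrightarrow> 0" by (rule tendsto_inverse_0_at_top)
  then show ?thesis by (simp add: inverse_eq_divide)
qed

lemma V2_lim: "(\<lambda>N. (\<Sum>k\<in>{1..N}. (r k)\<^sup>2) / ln (real N)) \<longlonglongrightarrow> L"
proof (rule real_tendsto_sandwich)
  show "(\<lambda>N. L - L * (1 / ln (real N))) \<longlonglongrightarrow> L"
    using tendsto_diff[OF tendsto_const tendsto_mult[OF tendsto_const inv_ln_lim], of L L] by simp
  show "(\<lambda>N. L + L * (1 / ln (real N))) \<longlonglongrightarrow> L"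
    using tendsto_add[OF tendsto_const tendsto_mult[OF tendsto_const inv_ln_lim], of L L] by simp
  have Lp: "L > 0" by (rule L_pos)
  show "\<forall>\<^sub>F N in sequentially. L - L * (1 / ln (real N)) \<le> (\<Sum>k\<in>{1..N}. (r k)\<^sup>2) / ln (real N)"
  proof (rule eventually_sequentiallyI[of 2])
    fix N :: nat assume N: "N \<ge> 2"
    have lnp: "ln (real N) > 0" using N by simp
    have "L * (ln (real N) - 1) \<le> L * (harm (Suc N) - 1)"
    proof -
      have "ln (real N) \<le> ln (real (Suc N) + 1)" using N by simp
      also have "\<dots> \<le> harm (Suc N)" by (rule ln_le_harm)
      finally show ?thesis using Lp by simp
    qed
    also have "\<dots> = (\<Sum>k\<in>{1..N}. L / (real k + 1))"
      by (simp add: sum_inv_shift[symmetric] sum_distrib_left)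
    also have "\<dots> \<le> (\<Sum>k\<in>{1..N}. (r k)\<^sup>2)" by (intro sum_mono r2_lower)
    finally have le: "L * (ln (real N) - 1) \<le> (\<Sum>k\<in>{1..N}. (r k)\<^sup>2)" .
    have "L - L * (1 / ln (real N)) = L * (ln (real N) - 1) / ln (real N)" using lnp by (simp add: field_simps)
    then show "L - L * (1 / ln (real N)) \<le> (\<Sum>k\<in>{1..N}. (r k)\<^sup>2) / ln (real N)"
      using divide_right_mono[OF le, of "ln (real N)"] lnp by simp
  qed
  show "\<forall>\<^sub>F N in sequentially. (\<Sum>k\<in>{1..N}. (r k)\<^sup>2) / ln (real N) \<le> L + L * (1 / ln (real N))"
  proof (rule eventually_sequentiallyI[of 2])
    fix N :: nat assume N: "N \<ge> 2"
    have lnp: "ln (real N) > 0" using N by simp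
    have "(\<Sum>k\<in>{1..N}. (r k)\<^sup>2) \<le> (\<Sum>k\<in>{1..N}. L / real k)" by (intro sum_mono r2_upper) auto
    also have "\<dots> = L * harm N" by (simp add: harm_def sum_distrib_left divide_inverse)
    also have "\<dots> \<le> L * (ln (real N) + 1)" using harm_upper[of N] N Lp by simp
    finally have "(\<Sum>k\<in>{1..N}. (r k)\<^sup>2) \<le> L * (ln (real N) + 1)" .
    then show "(\<Sum>k\<in>{1..N}. (r k)\<^sup>2) / ln (real N) \<le> L + L * (1 / ln (real N))"
      using lnp by (simp add: field_simps)
  qed
qed




lemma prod_diff_le:
  fixes a b :: "'i \<Rightarrow> real"
  assumes "finite I" "\<And>i. i \<in> I \<Longrightarrow> \<bar>a i\<bar> \<le> 1" "\<And>i. i \<in> I \<Longrightarrow> \<bar>b i\<bar> \<le> 1"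
  shows "\<bar>(\<Prod>i\<in>I. a i) - (\<Prod>i\<in>I. b i)\<bar> \<le> (\<Sum>i\<in>I. \<bar>a i - b i\<bar>)"
  using assms
proof (induction I rule: finite_induct)
  case empty then show ?case by simp
next
  case (insert x F)
  have pa: "\<bar>\<Prod>i\<in>F. a i\<bar> \<le> 1" using insert.prems by (simp add: abs_prod prod_le_1)
  have pb: "\<bar>\<Prod>i\<in>F. b i\<bar> \<le> 1" using insert.prems by (simp add: abs_prod prod_le_1)
  have ax: "\<bar>a x\<bar> \<le> 1" using insert.prems by simp
  have "(\<Prod>i\<in>insert x F. a i) - (\<Prod>i\<in>insert x F. b i)
      = a x * ((\<Prod>i\<in>F. a i) - (\<Prod>i\<in>F. b i)) + (a x - b x) * (\<Prod>i\<in>F. b i)"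
    using insert.hyps by (simp add: algebra_simps)
  then have "\<bar>(\<Prod>i\<in>insert x F. a i) - (\<Prod>i\<in>insert x F. b i)\<bar>
      \<le> \<bar>a x\<bar> * \<bar>(\<Prod>i\<in>F. a i) - (\<Prod>i\<in>F. b i)\<bar> + \<bar>a x - b x\<bar> * \<bar>\<Prod>i\<in>F. b i\<bar>"
    by (metis abs_mult abs_triangle_ineq)
  also have "\<dots> \<le> 1 * \<bar>(\<Prod>i\<in>F. a i) - (\<Prod>i\<in>F. b i)\<bar> + \<bar>a x - b x\<bar> * 1"
    by (intro add_mono mult_mono ax pb) auto
  also have "\<dots> \<le> (\<Sum>i\<in>F. \<bar>a i - b i\<bar>) + \<bar>a x - b x\<bar>"
    using insert by simp
  finally show ?case using insert.hyps by simp
qed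

lemma cos_approx: fixes y :: real shows "\<bar>cos y - (1 - y\<^sup>2/2)\<bar> \<le> y^4 / 24"
proof -
  have "cmod (iexp y - (\<Sum>k \<le> 3. (\<i> * y)^k / fact k)) \<le> \<bar>y\<bar>^4 / fact 4"
    using iexp_approx1[of y 3] by (simp add: numeral_eq_Suc)
  moreover have "Re (iexp y - (\<Sum>k \<le> 3. (\<i> * y)^k / fact k)) = cos y - (1 - y\<^sup>2/2)"
    by (simp add: numeral_eq_Suc Re_exp power2_eq_square fact_numeral)
  moreover have "fact 4 = (24::real)" by (simp add: fact_numeral)
  ultimately show ?thesis using abs_Re_le_cmod[of "iexp y - (\<Sum>k \<le> 3. (\<i> * y)^k / fact k)"]
    by (simp add: power_abs)
qed

lemma exp_approx: fixes v :: real assumes "v \<ge> 0" shows "\<bar>exp (-v) - (1 - v)\<bar> \<le> v\<^sup>2 / 2"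
proof -
  have l: "1 - v \<le> exp (-v)" using exp_ge_add_one_self[of "-v"] by simp
  have q: "1 + v + v\<^sup>2/2 \<le> exp v" by (rule exp_lower_Taylor_quadratic[OF assms])
  have pos: "1 + v + v\<^sup>2/2 > 0" using assms by (simp add: add_pos_nonneg)
  have "exp (-v) = 1 / exp v" by (simp add: exp_minus inverse_eq_divide)
  also have "\<dots> \<le> 1 / (1 + v + v\<^sup>2/2)" using q pos by (intro divide_left_mono) auto
  also have "\<dots> \<le> 1 - v + v\<^sup>2/2"
  proof -
    have "(1 - v + v\<^sup>2/2) * (1 + v + v\<^sup>2/2) = 1 + v^4/4" by (simp add: algebra_simps power2_eq_square power4_eq_xxxx)
    then have "1 \<le> (1 - v + v\<^sup>2/2) * (1 + v + v\<^sup>2/2)" by simp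
    then show ?thesis using pos by (simp add: divide_le_eq)
  qed
  finally show ?thesis using l by simp
qed

lemma cos_exp_approx: fixes y :: real shows "\<bar>cos y - exp (- (y\<^sup>2/2))\<bar> \<le> y^4"
proof -
  have "\<bar>exp (- (y\<^sup>2/2)) - (1 - y\<^sup>2/2)\<bar> \<le> (y\<^sup>2/2)\<^sup>2 / 2" by (rule exp_approx) simp
  also have "(y\<^sup>2/2)\<^sup>2 / 2 = y^4/8" by (simp add: power2_eq_square power4_eq_xxxx)
  finally have e: "\<bar>exp (- (y\<^sup>2/2)) - (1 - y\<^sup>2/2)\<bar> \<le> y^4/8" .
  have "y^4 \<ge> 0" by simp
  then show ?thesis using cos_approx[of y] e by linarith
qed

lemma prod_cos_lim:
  fixes I :: "nat \<Rightarrow> 'i set" and u :: "nat \<Rightarrow> 'i \<Rightarrow> real" and t s :: real and \<beta> :: "nat \<Rightarrow> real"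
  assumes fin: "\<And>N. finite (I N)"
    and V: "(\<lambda>N. \<Sum>i\<in>I N. (u N i)\<^sup>2) \<longlonglongrightarrow> s"
    and bd: "\<And>N i. i \<in> I N \<Longrightarrow> (u N i)\<^sup>2 \<le> \<beta> N"
    and \<beta>: "\<beta> \<longlonglongrightarrow> 0"
  shows "(\<lambda>N. \<Prod>i\<in>I N. cos (t * u N i)) \<longlonglongrightarrow> exp (- (t\<^sup>2 * s / 2))"
proof -
  define V where "V N = (\<Sum>i\<in>I N. (u N i)\<^sup>2)" for N
  define E where "E N = exp (- (t\<^sup>2 * V N / 2))" for N
  have E_eq: "E N = (\<Prod>i\<in>I N. exp (- ((t * u N i)\<^sup>2/2)))" for N
  proof -
    have "(\<Sum>i\<in>I N. - ((t * u N i)\<^sup>2/2)) = - (t\<^sup>2 * V N / 2)"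
      unfolding V_def by (simp add: sum_negf power_mult_distrib sum_distrib_left sum_divide_distrib)
    then show ?thesis unfolding E_def using exp_sum[OF fin[of N], of "\<lambda>i. - ((t * u N i)\<^sup>2/2)"] by simp
  qed
  have V': "V \<longlonglongrightarrow> s" unfolding V_def by (rule V)
  have a: "(\<lambda>N. t\<^sup>2 * V N / 2) \<longlonglongrightarrow> t\<^sup>2 * s / 2"
    by (rule tendsto_divide[OF tendsto_mult[OF tendsto_const V'] tendsto_const]) simp
  have E_lim: "E \<longlonglongrightarrow> exp (- (t\<^sup>2 * s / 2))" unfolding E_def by (rule tendsto_exp[OF tendsto_minus[OF a]])
  have diff: "\<bar>(\<Prod>i\<in>I N. cos (t * u N i)) - E N\<bar> \<le> t^4 * \<beta> N * V N" for N
  proof -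
    have "\<bar>(\<Prod>i\<in>I N. cos (t * u N i)) - E N\<bar> \<le> (\<Sum>i\<in>I N. \<bar>cos (t * u N i) - exp (- ((t * u N i)\<^sup>2/2))\<bar>)"
      unfolding E_eq by (rule prod_diff_le[OF fin]) auto
    also have "\<dots> \<le> (\<Sum>i\<in>I N. (t * u N i)^4)" by (intro sum_mono cos_exp_approx)
    also have "\<dots> \<le> (\<Sum>i\<in>I N. t^4 * \<beta> N * (u N i)\<^sup>2)"
    proof (intro sum_mono)
      fix i assume i: "i \<in> I N"
      have "(t * u N i)^4 = t^4 * ((u N i)\<^sup>2 * (u N i)\<^sup>2)" by (simp add: power_mult_distrib power4_eq_xxxx power2_eq_square)
      also have "\<dots> \<le> t^4 * (\<beta> N * (u N i)\<^sup>2)" by (intro mult_left_mono mult_right_mono bd i) auto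
      finally show "(t * u N i)^4 \<le> t^4 * \<beta> N * (u N i)\<^sup>2" by (simp add: mult.assoc)
    qed
    also have "\<dots> = t^4 * \<beta> N * V N" by (simp add: V_def sum_distrib_left)
    finally show ?thesis .
  qed
  have "(\<lambda>N. t^4 * \<beta> N * V N) \<longlonglongrightarrow> t^4 * 0 * s" by (rule tendsto_mult[OF tendsto_mult[OF tendsto_const \<beta>] V'])
  then have g0: "(\<lambda>N. t^4 * \<beta> N * V N) \<longlonglongrightarrow> 0" by simp
  have nb: "\<forall>N. norm ((\<Prod>i\<in>I N. cos (t * u N i)) - E N) \<le> t^4 * \<beta> N * V N"
    using diff by (simp only: real_norm_def) blast
  have "(\<lambda>N. (\<Prod>i\<in>I N. cos (t * u N i)) - E N) \<longlonglongrightarrow> 0"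
    by (rule Lim_null_comparison[OF always_eventually[OF nb] g0])
  from tendsto_add[OF this E_lim] show ?thesis by simp
qed




lemma p0_1': "p0 (Suc 0) k [x] = g k x" using p0_1 by simp

lemma finite_box: "finite (box d k)"
proof -
  have "box d k \<subseteq> {xs. set xs \<subseteq> {-int k..int k} \<and> length xs = d}"
    by (force simp: box_def in_set_conv_nth abs_le_iff)
  moreover have "finite {xs. set xs \<subseteq> {-int k..int k} \<and> length xs = d}"
    by (rule finite_lists_length_eq) simp
  ultimately show ?thesis by (rule finite_subset)
qed

lemma box1: "box 1 k = (\<lambda>y. [y]) ` {-int k..int k}"
proof
  show "box 1 k \<subseteq> (\<lambda>y. [y]) ` {-int k..int k}"
  proof
    fix x assume "x \<in> box 1 k"
    then obtain y where "x = [y]" "\<bar>y\<bar> \<le> int k" by (auto simp: box_def length_Suc_conv)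
    then show "x \<in> (\<lambda>y. [y]) ` {-int k..int k}" by (auto simp: image_iff abs_le_iff)
  qed
  show "(\<lambda>y. [y]) ` {-int k..int k} \<subseteq> box 1 k" by (auto simp: box_def)
qed

lemma box2: "box 2 k = (\<lambda>(y,z). [y,z]) ` ({-int k..int k} \<times> {-int k..int k})"
proof
  show "box 2 k \<subseteq> (\<lambda>(y,z). [y,z]) ` ({-int k..int k} \<times> {-int k..int k})"
  proof
    fix x assume x: "x \<in> box 2 k"
    then obtain y z where xy: "x = [y, z]" by (auto simp: box_def length_Suc_conv numeral_2_eq_2)
    have "\<bar>y\<bar> \<le> int k" "\<bar>z\<bar> \<le> int k" using x xy by (auto simp: box_def dest: spec[of _ 0] spec[of _ 1])
    then show "x \<in> (\<lambda>(y,z). [y,z]) ` ({-int k..int k} \<times> {-int k..int k})" using xy by force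
  qed
  show "(\<lambda>(y,z). [y,z]) ` ({-int k..int k} \<times> {-int k..int k}) \<subseteq> box 2 k"
    by (auto simp: box_def less_Suc_eq numeral_2_eq_2)
qed

lemma sum_box1: "(\<Sum>x\<in>box 1 k. (p0 1 k x)\<^sup>2) = r k"
proof -
  have "(\<Sum>x\<in>box 1 k. (p0 1 k x)\<^sup>2) = (\<Sum>y\<in>{-int k..int k}. (p0 1 k [y])\<^sup>2)"
    unfolding box1 by (rule sum.reindex_cong[where l="\<lambda>y. [y]"]) (auto simp: inj_on_def)
  also have "\<dots> = r k" by (simp add: p0_1 p0_1' s1)
  finally show ?thesis .
qed

lemma sum_box2: "(\<Sum>x\<in>box 2 k. (p0 2 k x)\<^sup>2) = (r k)\<^sup>2"
proof -
  have "(\<Sum>x\<in>box 2 k. (p0 2 k x)\<^sup>2) = (\<Sum>(y,z)\<in>{-int k..int k} \<times> {-int k..int k}. (p0 2 k [y,z])\<^sup>2)"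
    unfolding box2 by (rule sum.reindex_cong[where l="\<lambda>(y,z). [y,z]"]) (auto simp: inj_on_def)
  also have "\<dots> = (r k)\<^sup>2" by (simp add: p0_2 s2)
  finally show ?thesis .
qed

lemma p0_bounds: assumes "d \<in> {1,2}" shows "0 \<le> p0 d k x \<and> p0 d k x \<le> 1"
proof (cases "length x = d")
  case False then show ?thesis by (simp add: p0_len)
next
  case True
  show ?thesis
  proof (cases "d = 1")
    case True
    then obtain y where "x = [y]" using \<open>length x = d\<close> by (auto simp: length_Suc_conv)
    then show ?thesis using True by (simp add: p0_1 p0_1' g_nonneg g_le1)
  next
    case False
    then have d2: "d = 2" using assms by auto
    then obtain y z where "x = [y,z]" using \<open>length x = d\<close> by (auto simp: length_Suc_conv numeral_2_eq_2)
    then show ?thesis using d2 g_nonneg g_le1 by (simp add: p0_2 mult_le_one)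
  qed
qed




lemma normal_eq_distr:
  assumes s: "\<sigma> > 0"
  shows "density lborel (normal_density 0 \<sigma>) = distr std_normal_distribution lborel (\<lambda>x. \<sigma> * x)"
proof -
  interpret S: prob_space std_normal_distribution using prob_space_normal_density by simp
  have d: "distributed std_normal_distribution lborel (\<lambda>x. x) std_normal_density"
    unfolding distributed_def by (simp add: distr_id2)
  have "distributed std_normal_distribution lborel (\<lambda>x. 0 + \<sigma> * x) (normal_density (0 + \<sigma> * 0) (\<bar>\<sigma>\<bar> * 1))"
    by (rule S.normal_density_affine[OF d]) (use s in auto)
  then show ?thesis using s unfolding distributed_def by simp
qed

lemma char_normal:
  assumes s: "\<sigma> > 0"
  shows "char (density lborel (normal_density 0 \<sigma>)) t = complex_of_real (exp (- ((\<sigma> * t)\<^sup>2) / 2))"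
proof -
  have "char (density lborel (normal_density 0 \<sigma>)) t = (CLINT x|std_normal_distribution. iexp (t * (\<sigma> * x)))"
    unfolding normal_eq_distr[OF s] char_def by (subst integral_distr) auto
  also have "\<dots> = char std_normal_distribution (\<sigma> * t)" unfolding char_def by (simp add: ac_simps)
  also have "\<dots> = complex_of_real (exp (- ((\<sigma> * t)\<^sup>2) / 2))" by (simp add: char_std_normal_distribution)
  finally show ?thesis .
qed

lemma real_distribution_normal: "\<sigma> > 0 \<Longrightarrow> real_distribution (density lborel (normal_density 0 \<sigma>))"
  using prob_space_normal_density by (auto simp: real_distribution_def real_distribution_axioms_def)

lemma (in prob_space) char_pm1:
  fixes X :: "'a \<Rightarrow> real"
  assumes meas: "X \<in> borel_measurable M"
    and pm: "AE \<omega> in M. X \<omega> \<in> {-1, 1}"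
    and half: "prob {\<omega> \<in> space M. X \<omega> = 1} = 1/2"
  shows "char (distr M borel (\<lambda>\<omega>. a * X \<omega>)) t = complex_of_real (cos (t * a))"
proof -
  let ?A = "{\<omega> \<in> space M. X \<omega> = 1}"
  have Ameas: "?A \<in> events" using meas by measurable
  have AE1: "AE \<omega> in M. X \<omega> = 2 * indicator ?A \<omega> - 1"
    using pm AE_space by eventually_elim (auto simp: indicator_def)
  have intX: "integrable M X"
  proof (rule integrable_cong_AE_imp[OF _ _ AE_symmetric[OF AE1]])
    show "integrable M (\<lambda>\<omega>. 2 * indicator ?A \<omega> - 1 :: real)" using Ameas by (intro Bochner_Integration.integrable_diff integrable_mult_right integrable_real_indicator) (auto simp: emeasure_eq_measure)
  qed (rule meas)
  have EX: "expectation X = 0"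
  proof -
    have "expectation X = expectation (\<lambda>\<omega>. 2 * indicator ?A \<omega> - 1 :: real)" by (rule integral_cong_AE[OF meas _ AE1]) (use Ameas in auto)
    also have "\<dots> = 2 * prob ?A - 1" using Ameas by (subst Bochner_Integration.integral_diff) (auto simp: prob_space emeasure_eq_measure intro!: integrable_real_indicator)
    finally show ?thesis using half by simp
  qed
  have AE2: "AE \<omega> in M. iexp (t * (a * X \<omega>)) = complex_of_real (cos (t * a)) + \<i> * complex_of_real (sin (t * a) * X \<omega>)"
    using pm by eventually_elim (auto simp: exp_Euler cos_of_real sin_of_real simp flip: of_real_mult)
  have "char (distr M borel (\<lambda>\<omega>. a * X \<omega>)) t = (CLINT \<omega>|M. iexp (t * (a * X \<omega>)))"
    unfolding char_def using meas by (subst integral_distr) auto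
  also have "\<dots> = (CLINT \<omega>|M. complex_of_real (cos (t * a)) + \<i> * complex_of_real (sin (t * a) * X \<omega>))"
    by (rule integral_cong_AE[OF _ _ AE2]) (use meas in auto)
  also have "\<dots> = complex_of_real (cos (t * a)) + \<i> * complex_of_real (sin (t * a) * expectation X)"
    using intX by (simp add: prob_space)
  also have "\<dots> = complex_of_real (cos (t * a))" using EX by simp
  finally show ?thesis .
qed


lemma bsq: fixes c X :: real assumes c: "c \<noteq> 0" and X: "X > 0" shows "(c * (c\<^sup>2 * X) powr (-1/2))\<^sup>2 = 1 / X"
proof -
  have y: "c\<^sup>2 * X > 0" using c X by simp
  have "((c\<^sup>2 * X) powr (-1/2))\<^sup>2 = (c\<^sup>2 * X) powr (-1/2 + -1/2)"
    by (simp only: power2_eq_square powr_add[symmetric])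
  also have "\<dots> = 1 / (c\<^sup>2 * X)" using y by (simp add: powr_minus_divide)
  finally show ?thesis using c by (simp add: power_mult_distrib)
qed

theorem proposition30:
  fixes Q :: "'a measure" and h :: "nat \<Rightarrow> int list \<Rightarrow> 'a \<Rightarrow> real"
    and c :: "nat \<Rightarrow> real" and d :: nat
  assumes d: "d \<in> {1, 2}"
    and Q: "prob_space Q"
    and h_meas: "\<And>n x. length x = d \<Longrightarrow> h n x \<in> borel_measurable Q"
    and h_pm: "\<And>n x. length x = d \<Longrightarrow> AE \<omega> in Q. h n x \<omega> \<in> {-1, 1}"
    and h_half: "\<And>n x. length x = d \<Longrightarrow> measure Q {\<omega> \<in> space Q. h n x \<omega> = 1} = 1/2"
    and h_indep: "prob_space.indep_vars Q (\<lambda>_. borel) (\<lambda>(n, x). h n x)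
                    {(n, x). length x = d}"
    and c_pos: "\<And>N. c N > 0"
    and c1: "d = 1 \<Longrightarrow> (\<lambda>N. (c N)\<^sup>2 * sqrt (real N)) \<longlonglongrightarrow> 0"
    and c2: "d = 2 \<Longrightarrow> (\<lambda>N. (c N)\<^sup>2 * ln (real N)) \<longlonglongrightarrow> 0"
  shows "\<exists>\<mu> \<sigma>. \<sigma> > 0 \<and>
    weak_conv_m
      (\<lambda>N. distr Q borel (\<lambda>\<omega>. \<Sum>k=1..N. aN d c N * fk d c h N k \<omega>))
      (density lborel (normal_density \<mu> \<sigma>))"
proof -
  interpret prob_space Q by (rule Q)
  define b where "b N = aN d c N * c N" for N
  define I where "I N = Sigma {1..N} (\<lambda>k. box d k)" for N
  define H where "H = (\<lambda>(n::nat, x::int list). h n x)"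
  define u where "u N i = b N * p0 d (fst i) (snd i)" for N and i :: "nat \<times> int list"
  define S where "S N = (\<lambda>\<omega>. \<Sum>k=1..N. aN d c N * fk d c h N k \<omega>)" for N
  have finI: "finite (I N)" for N unfolding I_def by (auto intro: finite_box)
  have I_sub: "I N \<subseteq> {(n, x). length x = d}" for N unfolding I_def by (auto simp: box_def)
  have S_eq: "S N = (\<lambda>\<omega>. \<Sum>i\<in>I N. u N i * H i \<omega>)" for N
  proof
    fix \<omega>
    have "S N \<omega> = (\<Sum>k=1..N. \<Sum>x\<in>box d k. u N (k, x) * H (k, x) \<omega>)"
      unfolding S_def fk_def u_def b_def H_def by (simp add: sum_distrib_left ac_simps)
    also have "\<dots> = (\<Sum>i\<in>I N. u N i * H i \<omega>)"
      unfolding I_def by (subst sum.Sigma) (auto intro: finite_box)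
    finally show "S N \<omega> = (\<Sum>i\<in>I N. u N i * H i \<omega>)" .
  qed
  have Hmeas: "H i \<in> borel_measurable Q" if "i \<in> I N" for i N
    using that I_sub[of N] h_meas unfolding H_def by (auto split: prod.splits)
  have Smeas: "S N \<in> borel_measurable Q" for N
    unfolding S_eq using Hmeas by (intro borel_measurable_sum borel_measurable_times) auto
  have indep: "indep_vars (\<lambda>_. borel) (\<lambda>i \<omega>. u N i * H i \<omega>) (I N)" for N
  proof -
    have "indep_vars (\<lambda>_. borel) H (I N)"
      using indep_vars_subset[OF h_indep I_sub] unfolding H_def .
    then show ?thesis by (rule indep_vars_compose2[where Y="\<lambda>i v. u N i * v"]) auto
  qed
  have char_S: "char (distr Q borel (S N)) t = complex_of_real (\<Prod>i\<in>I N. cos (t * u N i))" for N t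
  proof -
    have "char (distr Q borel (S N)) t = (\<Prod>i\<in>I N. char (distr Q borel (\<lambda>\<omega>. u N i * H i \<omega>)) t)"
      unfolding S_eq by (rule char_distr_sum[OF indep])
    also have "\<dots> = (\<Prod>i\<in>I N. complex_of_real (cos (t * u N i)))"
    proof (rule prod.cong[OF refl])
      fix i assume i: "i \<in> I N"
      obtain n x where ix: "i = (n, x)" by force
      have lx: "length x = d" using i ix I_sub[of N] by auto
      show "char (distr Q borel (\<lambda>\<omega>. u N i * H i \<omega>)) t = complex_of_real (cos (t * u N i))"
      proof (rule char_pm1)
        show "H i \<in> borel_measurable Q" by (rule Hmeas[OF i])
        show "AE \<omega> in Q. H i \<omega> \<in> {-1, 1}" using h_pm[OF lx] unfolding H_def ix by simp
        show "prob {\<omega> \<in> space Q. H i \<omega> = 1} = 1/2" using h_half[OF lx] unfolding H_def ix by simp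
      qed
    qed
    finally show ?thesis by simp
  qed
  have p0b: "0 \<le> p0 d k x \<and> p0 d k x \<le> 1" for k x by (rule p0_bounds[OF d])
  have V_eq: "(\<Sum>i\<in>I N. (u N i)\<^sup>2) = (b N)\<^sup>2 * (\<Sum>k=1..N. \<Sum>x\<in>box d k. (p0 d k x)\<^sup>2)" for N
  proof -
    have "(b N)\<^sup>2 * (\<Sum>k=1..N. \<Sum>x\<in>box d k. (p0 d k x)\<^sup>2) = (\<Sum>k=1..N. \<Sum>x\<in>box d k. (b N * p0 d k x)\<^sup>2)"
      by (simp add: sum_distrib_left power_mult_distrib)
    also have "\<dots> = (\<Sum>(k,x)\<in>I N. (b N * p0 d k x)\<^sup>2)"
      unfolding I_def by (rule sum.Sigma) (auto intro: finite_box)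
    also have "\<dots> = (\<Sum>i\<in>I N. (u N i)\<^sup>2)" by (simp add: u_def case_prod_beta)
    finally show ?thesis by simp
  qed
  have bd: "(u N i)\<^sup>2 \<le> (b N)\<^sup>2" for N i
  proof -
    have "(p0 d (fst i) (snd i))\<^sup>2 \<le> 1" using p0b[of "fst i" "snd i"] by (simp add: power_le_one)
    then show ?thesis unfolding u_def by (simp add: power_mult_distrib mult_left_le)
  qed
  have cN: "c N \<noteq> 0" for N using c_pos[of N] by simp
  obtain s where s: "s > 0" "(\<lambda>N. \<Sum>i\<in>I N. (u N i)\<^sup>2) \<longlonglongrightarrow> s" "(\<lambda>N. (b N)\<^sup>2) \<longlonglongrightarrow> 0"
  proof (cases "d = 1")
    case True
    have b2: "(b N)\<^sup>2 = 1 / sqrt (real N)" if "N \<ge> 1" for N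
      unfolding b_def aN_def using True bsq[OF cN, of "sqrt (real N)"] that by (simp add: mult.commute)
    have ev1: "\<forall>\<^sub>F N in sequentially. ((2*real N+1) * r N - 1) / sqrt (real N) = (\<Sum>i\<in>I N. (u N i)\<^sup>2)"
    proof (rule eventually_sequentiallyI[of 1])
      fix N :: nat assume N: "N \<ge> 1"
      show "((2*real N+1) * r N - 1) / sqrt (real N) = (\<Sum>i\<in>I N. (u N i)\<^sup>2)"
        unfolding V_eq b2[OF N] True sum_box1 sum_r by simp
    qed
    have ev2: "\<forall>\<^sub>F N in sequentially. 1 / sqrt (real N) = (b N)\<^sup>2"
      using b2 by (intro eventually_sequentiallyI[of 1]) simp
    have t2: "(\<lambda>N. 1 / sqrt (real N)) \<longlonglongrightarrow> 0"
    proof -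
      have "(\<lambda>N. sqrt (1 / real N)) \<longlonglongrightarrow> sqrt 0" by (intro tendsto_intros lim_const_over_n)
      then show ?thesis by (simp add: real_sqrt_divide)
    qed
    show ?thesis
    proof (rule that)
      show "2 * sqrt L > 0" using L_pos by simp
      show "(\<lambda>N. \<Sum>i\<in>I N. (u N i)\<^sup>2) \<longlonglongrightarrow> 2 * sqrt L" using tendsto_cong[OF ev1] V1_lim by simp
      show "(\<lambda>N. (b N)\<^sup>2) \<longlonglongrightarrow> 0" using tendsto_cong[OF ev2] t2 by simp
    qed
  next
    case False
    then have d2: "d = 2" using d by auto
    have b2: "(b N)\<^sup>2 = 1 / ln (real N)" if "N \<ge> 2" for N
    proof -
      have "ln (real N) > 0" using that by simp
      then show ?thesis unfolding b_def aN_def using d2 bsq[OF cN, of "ln (real N)"] by (simp add: mult.commute)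
    qed
    have ev1: "\<forall>\<^sub>F N in sequentially. (\<Sum>k\<in>{1..N}. (r k)\<^sup>2) / ln (real N) = (\<Sum>i\<in>I N. (u N i)\<^sup>2)"
    proof (rule eventually_sequentiallyI[of 2])
      fix N :: nat assume N: "N \<ge> 2"
      show "(\<Sum>k\<in>{1..N}. (r k)\<^sup>2) / ln (real N) = (\<Sum>i\<in>I N. (u N i)\<^sup>2)"
        unfolding V_eq b2[OF N] d2 sum_box2 by simp
    qed
    have ev2: "\<forall>\<^sub>F N in sequentially. 1 / ln (real N) = (b N)\<^sup>2"
      using b2 by (intro eventually_sequentiallyI[of 2]) simp
    show ?thesis
    proof (rule that)
      show "L > 0" by (rule L_pos)
      show "(\<lambda>N. \<Sum>i\<in>I N. (u N i)\<^sup>2) \<longlonglongrightarrow> L" using tendsto_cong[OF ev1] V2_lim by simp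
      show "(\<lambda>N. (b N)\<^sup>2) \<longlonglongrightarrow> 0" using tendsto_cong[OF ev2] inv_ln_lim by simp
    qed
  qed
  define \<sigma> where "\<sigma> = sqrt s"
  have \<sigma>: "\<sigma> > 0" using s(1) by (simp add: \<sigma>_def)
  have "weak_conv_m (\<lambda>N. distr Q borel (S N)) (density lborel (normal_density 0 \<sigma>))"
  proof (rule levy_continuity)
    show "real_distribution (distr Q borel (S N))" for N using Smeas by simp
    show "real_distribution (density lborel (normal_density 0 \<sigma>))" by (rule real_distribution_normal[OF \<sigma>])
    fix t
    have "(\<lambda>N. \<Prod>i\<in>I N. cos (t * u N i)) \<longlonglongrightarrow> exp (- (t\<^sup>2 * s / 2))"
      by (rule prod_cos_lim[OF finI s(2) bd s(3)])
    then have "(\<lambda>N. complex_of_real (\<Prod>i\<in>I N. cos (t * u N i))) \<longlonglongrightarrow> complex_of_real (exp (- (t\<^sup>2 * s / 2)))"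
      by (rule tendsto_of_real)
    moreover have "exp (- (t\<^sup>2 * s / 2)) = exp (- ((\<sigma> * t)\<^sup>2) / 2)"
      using s(1) by (simp add: \<sigma>_def power_mult_distrib ac_simps)
    ultimately show "(\<lambda>N. char (distr Q borel (S N)) t) \<longlonglongrightarrow> char (density lborel (normal_density 0 \<sigma>)) t"
      by (simp add: char_S char_normal[OF \<sigma>])
  qed
  then show ?thesis using \<sigma> unfolding S_def by blast
qed


end
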